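(* Under the identification of the Lie algebroid of $\mathbb C^*\ltimes\mathbb C$ with $T_{\mathbb C}(-\log\{0\})$ via the anchor $(\partial_a,x)\mapsto x\partial_x$, and of holomorphic sections of $\mathbb C^*_{\mathbb C}( *\{0\})$ with $\mathcal O^*( *\{0\})$ (via $(x,f(x),i)\mapsto x^if(x)$), the Chevalley–Eilenberg complex of the $T_{\mathbb C}(-\log\{0\})$-module $\mathbb C^*_{\mathbb C}( *\{0\})$ (obtained by differentiating the $\mathbb C^*\ltimes\mathbb C$-module structure) is isomorphic to the complex $\mathcal O^*_{\mathbb C}( *\{0\})\xrightarrow{\mathrm{dlog}}\Omega^1_{\mathbb C}(\log\{0\})$.
   Context: $\mathbb C^*_{\mathbb C}( *\{0\}):=(\mathbb C\times\mathbb C^*\times\mathbb Z)/\!\sim$ with $(x,y,i)\sim(x,x^{-j}y,i+j)$ for $x\ne0$; it is a family of abelian groups over $\mathbb C$ (product $(x,y,i)(x,y',j)=(x,yy',i+j)$) and a module for the action groupoid $\mathbb C^*\ltimes\mathbb C$ ($a\cdot x=ax$) via $(a,x)\cdot(x,y,i)=(ax,a^{-i}y,i)$. Its Lie algebroid $\mathfrak m$ is the trivial line bundle $\mathbb C\times\mathbb C$ with trivial action. For a Lie algebroid $\mathfrak g$ and a $\mathfrak g$-module $M$ (representation on $\mathfrak m$ plus $\tilde L:\mathcal O(\mathfrak g)\otimes_{\mathbb Z}\mathcal O(M)\to\mathcal O(\mathfrak m)$ with $\tilde L_{fX}=f\tilde L_X$, $\tilde L_{[X,Y]}=L_X\tilde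 L_Y-L_Y\tilde L_X$, $\tilde L_X\exp\sigma=L_X\sigma$), the Chevalley–Eilenberg complex is $\mathcal O(M)\xrightarrow{d_{CE}\log}\mathcal O(\mathfrak g^*\otimes\mathfrak m)\to\mathcal O(\Lambda^2\mathfrak g^*\otimes\mathfrak m)\to\cdots$ with $d_{CE}\log s(X)=\tilde L_Xs$; a $G$-module induces a $\mathfrak g$-module by $\tilde L_{\dot\gamma(0)}r=\frac d{d\epsilon}|_0r(x)^{-1}[\gamma(\epsilon)^{-1}\cdot r(t(\gamma(\epsilon)))]$ for curves $\gamma$ in source fibres through the identity. $\Omega^1_{\mathbb C}(\log\{0\})$ is the sheaf of logarithmic $1$-forms with poles along $0$ and $T_{\mathbb C}(-\log\{0\})$ the Lie algebroid of vector fields vanishing at $0$. *)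

theory Defs
  imports "HOL-Complex_Analysis.Complex_Analysis"
begin

definition CMcar :: "(complex \<times> complex \<times> int) set" where
  "CMcar = {(x,y,i). y \<noteq> 0}"

definition CMrel :: "((complex \<times> complex \<times> int) \<times> (complex \<times> complex \<times> int)) set" where
  "CMrel = {((x,y,i),(x',y',i')). x' = x \<and> y \<noteq> 0 \<and> y' \<noteq> 0 \<and>
      (if x = 0 then y' = y \<and> i' = i else y' = x powi (i - i') * y)}"

definition cls :: "complex \<Rightarrow> complex \<Rightarrow> int \<Rightarrow> (complex \<times> complex \<times> int) set" where
  "cls x y i = CMrel `` {(x,y,i)}"

definition CM :: "(complex \<times> complex \<times> int) set set" where
  "CM = CMcar // CMrel"

definition rep :: "(complex \<times> complex \<times> int) set \<Rightarrow> complex \<times> complex \<times> int" where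
  "rep P = (SOME p. p \<in> P)"

definition proj :: "(complex \<times> complex \<times> int) set \<Rightarrow> complex" where
  "proj P = fst (rep P)"

definition fmult :: "(complex \<times> complex \<times> int) set \<Rightarrow> (complex \<times> complex \<times> int) set \<Rightarrow> (complex \<times> complex \<times> int) set" where
  "fmult P Q = (case rep P of (x,y,i) \<Rightarrow> case rep Q of (x',y',j) \<Rightarrow> cls x (y*y') (i+j))"

definition finv :: "(complex \<times> complex \<times> int) set \<Rightarrow> (complex \<times> complex \<times> int) set" where
  "finv P = (case rep P of (x,y,i) \<Rightarrow> cls x (inverse y) (-i))"

text \<open>Coordinate on the identity component of the fibre over x (classes of (x,y,0)),
  identifying it with C* and hence its Lie algebra with C (the line bundle m).\<close>

definition fcoord :: "(complex \<times> complex \<times> int) set \<Rightarrow> complex" where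
  "fcoord P = (THE y. (proj P, y, 0) \<in> P)"

definition gsrc :: "complex \<times> complex \<Rightarrow> complex" where "gsrc g = snd g"
definition gtgt :: "complex \<times> complex \<Rightarrow> complex" where "gtgt g = fst g * snd g"
definition ginv :: "complex \<times> complex \<Rightarrow> complex \<times> complex" where
  "ginv g = (inverse (fst g), fst g * snd g)"

definition gact :: "complex \<times> complex \<Rightarrow> (complex \<times> complex \<times> int) set \<Rightarrow> (complex \<times> complex \<times> int) set" where
  "gact g P = (case rep P of (x,y,i) \<Rightarrow> cls (fst g * x) (fst g powi (-i) * y) i)"

text \<open>The Lie algebroid of C* \<ltimes> C is the trivial bundle C \<times> C; the element v at x is v \<partial>_a,
  tangent to the curve eps \<mapsto> (exp(eps v), x) in the source fibre of x through the identity.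
  Ltilde_{v \<partial>_a at x} r = d/d eps|_0 r(x)^{-1} [gamma(eps)^{-1} . r(t(gamma(eps)))].\<close>

definition Ltilde_pt :: "complex \<Rightarrow> complex \<Rightarrow> (complex \<Rightarrow> (complex \<times> complex \<times> int) set) \<Rightarrow> complex" where
  "Ltilde_pt x v r = vector_derivative
     (\<lambda>eps::real. let \<gamma> = (exp (of_real eps * v), x) in
        fcoord (fmult (finv (r x)) (gact (ginv \<gamma>) (r (gtgt \<gamma>))))) (at 0)"

text \<open>Ltilde on a section X (coefficient function of \<partial>_a).\<close>

definition LtildeX :: "(complex \<Rightarrow> complex) \<Rightarrow> (complex \<Rightarrow> (complex \<times> complex \<times> int) set) \<Rightarrow> complex \<Rightarrow> complex" where
  "LtildeX X r = (\<lambda>x. Ltilde_pt x (X x) r)"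

definition secM :: "complex set \<Rightarrow> (complex \<Rightarrow> (complex \<times> complex \<times> int) set) set" where
  "secM U = {\<sigma>. (\<forall>x. x \<notin> U \<longrightarrow> \<sigma> x = {}) \<and>
     (\<forall>x0\<in>U. \<exists>W. open W \<and> x0 \<in> W \<and> W \<subseteq> U \<and>
        (\<exists>g i. g holomorphic_on W \<and> (\<forall>x\<in>W. g x \<noteq> 0) \<and> (\<forall>x\<in>W. \<sigma> x = cls x (g x) i)))}"

definition secmult :: "complex set \<Rightarrow> (complex \<Rightarrow> (complex \<times> complex \<times> int) set) \<Rightarrow> (complex \<Rightarrow> (complex \<times> complex \<times> int) set) \<Rightarrow> (complex \<Rightarrow> (complex \<times> complex \<times> int) set)" where
  "secmult U \<sigma> \<tau> = (\<lambda>x. if x \<in> U then fmult (\<sigma> x) (\<tau> x) else {})"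

text \<open>Holomorphic sections of g^* \<otimes> m (trivial line bundle), via their value on the frame \<partial>_a.\<close>

definition secGdual :: "complex set \<Rightarrow> (complex \<Rightarrow> complex) set" where
  "secGdual U = {\<alpha>. \<alpha> holomorphic_on U \<and> (\<forall>x. x \<notin> U \<longrightarrow> \<alpha> x = 0)}"

text \<open>d_CE log s, evaluated on the frame \<partial>_a (the section with constant coefficient 1).\<close>

definition dCE :: "complex set \<Rightarrow> (complex \<Rightarrow> (complex \<times> complex \<times> int) set) \<Rightarrow> complex \<Rightarrow> complex" where
  "dCE U s = (\<lambda>x. if x \<in> U then LtildeX (\<lambda>_. 1) s x else 0)"

text \<open>O^*(*{0})(U): meromorphic functions, holomorphic and nonvanishing off 0,
  locally x^i f(x) near 0 with f holomorphic nonvanishing (values normalised to 0 off U - {0}).\<close>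

definition Ostar_mero :: "complex set \<Rightarrow> (complex \<Rightarrow> complex) set" where
  "Ostar_mero U = {h. h holomorphic_on (U - {0}) \<and> (\<forall>x\<in>U - {0}. h x \<noteq> 0) \<and>
     (\<forall>x. x \<notin> U - {0} \<longrightarrow> h x = 0) \<and>
     (0 \<in> U \<longrightarrow> (\<exists>W f i. open W \<and> 0 \<in> W \<and> W \<subseteq> U \<and> f holomorphic_on W \<and>
        (\<forall>x\<in>W. f x \<noteq> 0) \<and> (\<forall>x\<in>W - {0}. h x = x powi i * f x)))}"

text \<open>\<Omega>^1(log {0})(U): forms g dx with x g holomorphic on U (coefficient g, normalised to 0 off U - {0}).\<close>

definition OmegaLog :: "complex set \<Rightarrow> (complex \<Rightarrow> complex) set" where
  "OmegaLog U = {g. g holomorphic_on (U - {0}) \<and> (\<forall>x. x \<notin> U - {0} \<longrightarrow> g x = 0) \<and>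
     (\<exists>G. G holomorphic_on U \<and> (\<forall>x\<in>U - {0}. G x = x * g x))}"

definition dlog :: "complex set \<Rightarrow> (complex \<Rightarrow> complex) \<Rightarrow> complex \<Rightarrow> complex" where
  "dlog U h = (\<lambda>x. if x \<in> U - {0} then deriv h x / h x else 0)"

definition phi0 :: "complex set \<Rightarrow> (complex \<Rightarrow> (complex \<times> complex \<times> int) set) \<Rightarrow> complex \<Rightarrow> complex" where
  "phi0 U \<sigma> = (\<lambda>x. if x \<in> U - {0} then (case rep (\<sigma> x) of (x',y,i) \<Rightarrow> x powi i * y) else 0)"

text \<open>Anchor: v \<partial>_a at x \<mapsto> v x \<partial>_x (coefficient of \<partial>_x).\<close>

definition anchor :: "complex \<Rightarrow> complex \<Rightarrow> complex" where
  "anchor x v = v * x"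

text \<open>Dual of the anchor identification g \<cong> T(-log 0): \<alpha> \<mapsto> \<omega> with \<omega>(anchor \<partial>_a) = \<alpha>(\<partial>_a).\<close>

definition phi1 :: "complex set \<Rightarrow> (complex \<Rightarrow> complex) \<Rightarrow> complex \<Rightarrow> complex" where
  "phi1 U \<alpha> = (\<lambda>x. if x \<in> U - {0} then \<alpha> x / anchor x 1 else 0)"

end

theory Submission
  imports Defs
begin

lemma cls_mem:
  "y \<noteq> 0 \<Longrightarrow> (a,b,k) \<in> cls x y i \<longleftrightarrow>
     a = x \<and> b \<noteq> 0 \<and> (if x = 0 then b = y \<and> k = i else b = x powi (i-k) * y)"
  unfolding cls_def CMrel_def by auto

lemma cls_self: "y \<noteq> 0 \<Longrightarrow> (x,y,i) \<in> cls x y i"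
  by (simp add: cls_mem)

lemma powi_shift:
  fixes x :: complex
  assumes "x \<noteq> 0"
  shows "x powi (a - b) * (x powi (c - a) * y) = x powi (c - b) * y"
proof -
  have "x powi (c - b) = x powi (c - a) * x powi (a - b)"
    using power_int_add[of x "c-a" "a-b"] assms by simp
  thus ?thesis by (simp add: algebra_simps)
qed

lemma cls_eqI:
  assumes "y \<noteq> 0" "(a,b,k) \<in> cls x y i"
  shows "cls a b k = cls x y i"
proof -
  from assms have a: "a = x" and b: "b \<noteq> 0"
    and c: "if x = 0 then b = y \<and> k = i else b = x powi (i-k) * y"
    by (auto simp: cls_mem)
  show ?thesis
  proof (rule set_eqI)
    fix p :: "complex \<times> complex \<times> int"
    obtain a' b' k' where p: "p = (a',b',k')" by (cases p)
    show "p \<in> cls a b k \<longleftrightarrow> p \<in> cls x y i"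
    proof (cases "x = 0")
      case True thus ?thesis using a b c assms(1) by (simp add: p cls_mem)
    next
      case False
      have "b' = x powi (k - k') * b \<longleftrightarrow> b' = x powi (i - k') * y"
        using c False powi_shift[OF False, of k k' i y] by (simp only: if_False)
      thus ?thesis using a b c False assms(1) by (simp add: p cls_mem)
    qed
  qed
qed

lemma cls_shift:
  assumes "x \<noteq> 0" "y \<noteq> 0"
  shows "cls x (x powi (i - j) * y) j = cls x y i"
  by (rule cls_eqI) (use assms in \<open>auto simp: cls_mem\<close>)

lemma rep_cls:
  assumes "y \<noteq> 0"
  obtains y' i' where "rep (cls x y i) = (x, y', i')" "y' \<noteq> 0"
    "if x = 0 then y' = y \<and> i' = i else y' = x powi (i - i') * y"
proof -
  have "rep (cls x y i) \<in> cls x y i"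
    unfolding rep_def using cls_self[OF assms] by (rule someI)
  then obtain a y' i' where "rep (cls x y i) = (a,y',i')" "(a,y',i') \<in> cls x y i"
    by (metis prod_cases3)
  thus ?thesis using that assms by (auto simp: cls_mem)
qed

lemma phi0_cls:
  assumes "x \<noteq> 0" "y \<noteq> 0"
  shows "(case rep (cls x y i) of (x',y',i') \<Rightarrow> x powi i' * y') = x powi i * y"
proof -
  obtain y' i' where r: "rep (cls x y i) = (x, y', i')"
    "y' = x powi (i - i') * y" using rep_cls[OF assms(2)] assms(1) by metis
  have "x powi i = x powi i' * x powi (i - i')"
    using power_int_add[of x i' "i-i'"] assms(1) by simp
  thus ?thesis using r by (simp add: algebra_simps)
qed

lemma fmult_cls:
  assumes "a \<noteq> 0" "b \<noteq> 0"
  shows "fmult (cls x a i) (cls x b j) = cls x (a*b) (i+j)"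
proof -
  obtain a' i' where r1: "rep (cls x a i) = (x, a', i')" "a' \<noteq> 0"
    "if x = 0 then a' = a \<and> i' = i else a' = x powi (i - i') * a" using rep_cls[OF assms(1)] by metis
  obtain b' j' where r2: "rep (cls x b j) = (x, b', j')" "b' \<noteq> 0"
    "if x = 0 then b' = b \<and> j' = j else b' = x powi (j - j') * b" using rep_cls[OF assms(2)] by metis
  have "fmult (cls x a i) (cls x b j) = cls x (a'*b') (i'+j')"
    by (simp add: fmult_def r1 r2)
  also have "\<dots> = cls x (a*b) (i+j)"
  proof (cases "x = 0")
    case True thus ?thesis using r1 r2 by simp
  next
    case False
    have "x powi (i + j - (i' + j')) = x powi (i - i') * x powi (j - j')"
      using power_int_add[of x "i-i'" "j-j'"] False by (simp add: algebra_simps)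
    hence "a'*b' = x powi (i + j - (i' + j')) * (a*b)" using r1 r2 False by simp
    thus ?thesis using cls_shift[OF False, of "a*b" "i+j" "i'+j'"] assms by simp
  qed
  finally show ?thesis .
qed

lemma finv_cls:
  assumes "a \<noteq> 0"
  shows "finv (cls x a i) = cls x (inverse a) (-i)"
proof -
  obtain a' i' where r1: "rep (cls x a i) = (x, a', i')" "a' \<noteq> 0"
    "if x = 0 then a' = a \<and> i' = i else a' = x powi (i - i') * a" using rep_cls[OF assms(1)] by metis
  have "finv (cls x a i) = cls x (inverse a') (-i')"
    by (simp add: finv_def r1)
  also have "\<dots> = cls x (inverse a) (-i)"
  proof (cases "x = 0")
    case True thus ?thesis using r1 by simp
  next
    case False
    have "inverse a' = x powi (-i - (-i')) * inverse a"
      using r1 False by (simp add: power_int_minus[symmetric] power_int_inverse[symmetric])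
    thus ?thesis using cls_shift[OF False, of "inverse a" "-i" "-i'"] assms by simp
  qed
  finally show ?thesis .
qed

lemma gact_cls:
  assumes "c \<noteq> 0" "y \<noteq> 0"
  shows "gact (c, z) (cls x y i) = cls (c*x) (c powi (-i) * y) i"
proof -
  obtain a' i' where r1: "rep (cls x y i) = (x, a', i')" "a' \<noteq> 0"
    "if x = 0 then a' = y \<and> i' = i else a' = x powi (i - i') * y" using rep_cls[OF assms(2)] by metis
  have "gact (c,z) (cls x y i) = cls (c*x) (c powi (-i') * a') i'"
    by (simp add: gact_def r1)
  also have "\<dots> = cls (c*x) (c powi (-i) * y) i"
  proof (cases "x = 0")
    case True thus ?thesis using r1 by simp
  next
    case False
    hence cx: "c*x \<noteq> 0" using assms by simp
    have e1: "c powi (i - i') * c powi (-i) = c powi (-i')"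
      using power_int_add[of c "i-i'" "-i"] assms(1) by simp
    have "c powi (-i') * a' = (c*x) powi (i - i') * (c powi (-i) * y)"
      using r1 False e1 by (simp add: power_int_mult_distrib algebra_simps)
    thus ?thesis using cls_shift[OF cx, of "c powi (-i) * y" i i'] assms by simp
  qed
  finally show ?thesis .
qed

lemma fcoord_cls:
  assumes "c \<noteq> 0"
  shows "fcoord (cls x c 0) = c"
proof -
  obtain a' i' where r1: "rep (cls x c 0) = (x, a', i')" using rep_cls[OF assms] by metis
  have "proj (cls x c 0) = x" by (simp add: proj_def r1)
  thus ?thesis unfolding fcoord_def using assms
    by (auto simp: cls_mem)
qed

lemma eq_at_point:
  fixes f g :: "complex \<Rightarrow> complex"
  assumes "open W" "a \<in> W" "continuous_on W f" "continuous_on W g"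
    "\<And>x. x \<in> W \<Longrightarrow> x \<noteq> a \<Longrightarrow> f x = g x"
  shows "f a = g a"
proof -
  have "f \<midarrow>a\<rightarrow> f a" using assms(1-3) continuous_on_eq_continuous_at isCont_def by blast
  moreover have "g \<midarrow>a\<rightarrow> g a" using assms(1,2,4) continuous_on_eq_continuous_at isCont_def by blast
  moreover have "eventually (\<lambda>x. f x = g x) (at a)"
    using assms(1,2,5) eventually_at_topological by blast
  ultimately have "g \<midarrow>a\<rightarrow> f a" using tendsto_cong by fastforce
  thus ?thesis using \<open>g \<midarrow>a\<rightarrow> g a\<close> LIM_unique by blast
qed

lemma Ltilde_chart:
  assumes W: "open W" "x \<in> W" "g holomorphic_on W" "\<And>y. y \<in> W \<Longrightarrow> g y \<noteq> 0"
    "\<And>y. y \<in> W \<Longrightarrow> s y = cls y (g y) i"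
  shows "Ltilde_pt x 1 s = of_int i + x * deriv g x / g x"
proof -
  define S where "S = (\<lambda>e::real. exp (of_real e) * x) -` W"
  have oS: "open S" unfolding S_def
    by (rule open_vimage[OF W(1)]) (auto intro!: continuous_intros)
  have S0: "0 \<in> S" using W(2) by (simp add: S_def)
  define H where "H = (\<lambda>z. inverse (g x) * (exp (of_int i * z) * g (exp z * x)))"
  have gx: "g x \<noteq> 0" using W by auto
  have gd: "(g has_field_derivative deriv g x) (at (exp 0 * x))"
    using holomorphic_derivI[OF W(3,1,2)] by simp
  have ed: "((\<lambda>z. exp z * x) has_field_derivative x) (at 0)"
    by (auto intro!: derivative_eq_intros)
  have gcd: "((\<lambda>z. g (exp z * x)) has_field_derivative deriv g x * x) (at 0)"
    using DERIV_chain2[OF gd ed] .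
  have Hd: "(H has_field_derivative (of_int i + x * deriv g x / g x)) (at (of_real 0))"
  proof -
    have "(H has_field_derivative inverse (g x) * ((of_int i * exp (of_int i * 0)) * g (exp 0 * x)
             + exp (of_int i * 0) * (deriv g x * x))) (at 0)"
      unfolding H_def by (auto intro!: derivative_eq_intros gcd)
    moreover have "inverse (g x) * ((of_int i * exp (of_int i * 0)) * g (exp 0 * x)
             + exp (of_int i * 0) * (deriv g x * x)) = of_int i + x * deriv g x / g x"
      using gx by (simp add: field_simps)
    ultimately show ?thesis by simp
  qed
  have vd: "((\<lambda>e. H (of_real e)) has_vector_derivative (of_int i + x * deriv g x / g x)) (at 0)"
    by (rule has_vector_derivative_real_field[OF Hd])
  have eqS: "H (of_real e) = (let \<gamma> = (exp (of_real e * 1), x) in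
        fcoord (fmult (finv (s x)) (gact (ginv \<gamma>) (s (gtgt \<gamma>)))))" if "e \<in> S" for e
  proof -
    define c where "c = exp (complex_of_real e)"
    have c0: "c \<noteq> 0" by (simp add: c_def)
    have cW: "c * x \<in> W" using that by (simp add: S_def c_def)
    have ge: "g (c*x) \<noteq> 0" using W(4) cW by auto
    have "(let \<gamma> = (exp (of_real e * 1), x) in
        fcoord (fmult (finv (s x)) (gact (ginv \<gamma>) (s (gtgt \<gamma>)))))
        = fcoord (fmult (finv (cls x (g x) i)) (gact (inverse c, c * x) (cls (c*x) (g (c*x)) i)))"
      using W(5)[OF cW] by (simp add: Let_def c_def ginv_def gtgt_def W(5)[OF W(2)])
    also have "\<dots> = fcoord (fmult (cls x (inverse (g x)) (-i)) (cls x (c powi i * g (c*x)) i))"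
      using c0 ge gx by (simp add: finv_cls gact_cls power_int_minus power_int_inverse mult.assoc[symmetric])
    also have "\<dots> = fcoord (cls x (inverse (g x) * (c powi i * g (c*x))) 0)"
      using c0 ge gx by (simp add: fmult_cls)
    also have "\<dots> = inverse (g x) * (c powi i * g (c*x))"
      using c0 ge gx by (simp add: fcoord_cls)
    also have "\<dots> = H (of_real e)"
      by (simp add: H_def c_def exp_power_int)
    finally show ?thesis by simp
  qed
  have "((\<lambda>eps::real. let \<gamma> = (exp (of_real eps * 1), x) in
        fcoord (fmult (finv (s x)) (gact (ginv \<gamma>) (s (gtgt \<gamma>))))) has_vector_derivative
        (of_int i + x * deriv g x / g x)) (at 0)"
    by (rule has_vector_derivative_transform_within_open[OF vd oS S0]) (use eqS in auto)
  thus ?thesis unfolding Ltilde_pt_def by (rule vector_derivative_at)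
qed

lemma holo_local:
  assumes "\<And>x. x \<in> S \<Longrightarrow> \<exists>W h. open W \<and> x \<in> W \<and> h holomorphic_on W \<and> (\<forall>y\<in>W. f y = h y)"
  shows "f holomorphic_on S"
proof -
  have "f analytic_on S" unfolding analytic_on_def
  proof
    fix x assume "x \<in> S"
    then obtain W h where W: "open W" "x \<in> W" "h holomorphic_on W" "\<forall>y\<in>W. f y = h y"
      using assms by blast
    then obtain e where e: "e > 0" "ball x e \<subseteq> W" using openE by blast
    have "h holomorphic_on ball x e" using W(3) e(2) holomorphic_on_subset by blast
    have "f holomorphic_on ball x e"
      by (rule holomorphic_transform[OF \<open>h holomorphic_on ball x e\<close>]) (use W(4) e(2) in auto)
    thus "\<exists>e>0. f holomorphic_on ball x e" using e(1) by blast
  qed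
  thus ?thesis by (rule analytic_imp_holomorphic)
qed

lemma secM_chart:
  assumes "\<sigma> \<in> secM U" "x \<in> U"
  obtains W g i where "open W" "x \<in> W" "W \<subseteq> U" "g holomorphic_on W" "\<And>y. y \<in> W \<Longrightarrow> g y \<noteq> 0"
    "\<And>y. y \<in> W \<Longrightarrow> \<sigma> y = cls y (g y) i"
proof -
  have "\<exists>W. open W \<and> x \<in> W \<and> W \<subseteq> U \<and>
        (\<exists>g i. g holomorphic_on W \<and> (\<forall>x\<in>W. g x \<noteq> 0) \<and> (\<forall>x\<in>W. \<sigma> x = cls x (g x) i))"
    using assms unfolding secM_def by simp
  then obtain W g i where "open W" "x \<in> W" "W \<subseteq> U" "g holomorphic_on W" "\<forall>x\<in>W. g x \<noteq> 0"
    "\<forall>x\<in>W. \<sigma> x = cls x (g x) i" by blast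
  thus ?thesis using that by blast
qed

lemma secM_out: "\<sigma> \<in> secM U \<Longrightarrow> x \<notin> U \<Longrightarrow> \<sigma> x = {}"
  unfolding secM_def by blast

lemma phi0_chart:
  assumes "\<And>y. y \<in> W \<Longrightarrow> g y \<noteq> 0" "\<And>y. y \<in> W \<Longrightarrow> \<sigma> y = cls y (g y) i" "W \<subseteq> U"
    "y \<in> W" "y \<noteq> 0"
  shows "phi0 U \<sigma> y = y powi i * g y"
proof -
  have "y \<in> U - {0}" using assms by auto
  hence "phi0 U \<sigma> y = (case rep (cls y (g y) i) of (x',y',i') \<Rightarrow> y powi i' * y')"
    using assms(2)[OF assms(4)] by (simp add: phi0_def)
  also have "\<dots> = y powi i * g y" using phi0_cls[OF assms(5) assms(1)[OF assms(4)]] .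
  finally show ?thesis .
qed

lemma phi0_in:
  assumes U: "open U" and s: "\<sigma> \<in> secM U"
  shows "phi0 U \<sigma> \<in> Ostar_mero U"
proof -
  have holo: "phi0 U \<sigma> holomorphic_on (U - {0})"
  proof (rule holo_local)
    fix x assume x: "x \<in> U - {0}"
    then obtain W g i where W: "open W" "x \<in> W" "W \<subseteq> U" "g holomorphic_on W" "\<And>y. y \<in> W \<Longrightarrow> g y \<noteq> 0"
      "\<And>y. y \<in> W \<Longrightarrow> \<sigma> y = cls y (g y) i" using secM_chart[OF s] by blast
    show "\<exists>W h. open W \<and> x \<in> W \<and> h holomorphic_on W \<and> (\<forall>y\<in>W. phi0 U \<sigma> y = h y)"
    proof (intro exI conjI ballI)
      show "open (W - {0})" using W(1) by auto
      show "x \<in> W - {0}" using x W(2) by auto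
      show "(\<lambda>y. y powi i * g y) holomorphic_on (W - {0})"
      proof -
        have "g holomorphic_on (W - {0})" using W(4) holomorphic_on_subset by blast
        thus ?thesis by (auto intro!: holomorphic_intros)
      qed
      fix y assume "y \<in> W - {0}"
      thus "phi0 U \<sigma> y = y powi i * g y" using phi0_chart[OF W(5,6,3)] by auto
    qed
  qed
  have nz: "\<forall>x\<in>U - {0}. phi0 U \<sigma> x \<noteq> 0"
  proof
    fix x assume x: "x \<in> U - {0}"
    then obtain W g i where W: "open W" "x \<in> W" "W \<subseteq> U" "g holomorphic_on W" "\<And>y. y \<in> W \<Longrightarrow> g y \<noteq> 0"
      "\<And>y. y \<in> W \<Longrightarrow> \<sigma> y = cls y (g y) i" using secM_chart[OF s] by blast
    show "phi0 U \<sigma> x \<noteq> 0" using phi0_chart[OF W(5,6,3) W(2)] x W(5)[OF W(2)] by auto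
  qed
  have out: "\<forall>x. x \<notin> U - {0} \<longrightarrow> phi0 U \<sigma> x = 0" by (simp add: phi0_def)
  have z: "0 \<in> U \<longrightarrow> (\<exists>W f i. open W \<and> 0 \<in> W \<and> W \<subseteq> U \<and> f holomorphic_on W \<and>
        (\<forall>x\<in>W. f x \<noteq> 0) \<and> (\<forall>x\<in>W - {0}. phi0 U \<sigma> x = x powi i * f x))"
  proof
    assume "0 \<in> U"
    then obtain W g i where W: "open W" "0 \<in> W" "W \<subseteq> U" "g holomorphic_on W" "\<And>y. y \<in> W \<Longrightarrow> g y \<noteq> 0"
      "\<And>y. y \<in> W \<Longrightarrow> \<sigma> y = cls y (g y) i" using secM_chart[OF s] by blast
    show "\<exists>W f i. open W \<and> 0 \<in> W \<and> W \<subseteq> U \<and> f holomorphic_on W \<and>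
        (\<forall>x\<in>W. f x \<noteq> 0) \<and> (\<forall>x\<in>W - {0}. phi0 U \<sigma> x = x powi i * f x)"
      using W phi0_chart[OF W(5,6,3)] by blast
  qed
  show ?thesis unfolding Ostar_mero_def mem_Collect_eq by (intro conjI holo nz out z)
qed

lemma phi0_inj:
  assumes U: "open U" and s: "\<sigma> \<in> secM U" and t: "\<tau> \<in> secM U" and eq: "phi0 U \<sigma> = phi0 U \<tau>"
  shows "\<sigma> = \<tau>"
proof
  fix x
  show "\<sigma> x = \<tau> x"
  proof (cases "x \<in> U")
    case False thus ?thesis using secM_out[OF s False] secM_out[OF t False] by simp
  next
    case xU: True
    obtain W1 g1 i1 where W1: "open W1" "x \<in> W1" "W1 \<subseteq> U" "g1 holomorphic_on W1" "\<And>y. y \<in> W1 \<Longrightarrow> g1 y \<noteq> 0"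
      "\<And>y. y \<in> W1 \<Longrightarrow> \<sigma> y = cls y (g1 y) i1" using secM_chart[OF s xU] by blast
    obtain W2 g2 i2 where W2: "open W2" "x \<in> W2" "W2 \<subseteq> U" "g2 holomorphic_on W2" "\<And>y. y \<in> W2 \<Longrightarrow> g2 y \<noteq> 0"
      "\<And>y. y \<in> W2 \<Longrightarrow> \<tau> y = cls y (g2 y) i2" using secM_chart[OF t xU] by blast
    have peq: "y powi i1 * g1 y = y powi i2 * g2 y" if "y \<in> W1 \<inter> W2" "y \<noteq> 0" for y
      using phi0_chart[OF W1(5,6,3), of y] phi0_chart[OF W2(5,6,3), of y] that eq by auto
    show ?thesis
    proof (cases "x = 0")
      case False
      have "\<sigma> x = cls x (x powi i1 * g1 x) 0"
        using cls_shift[OF False W1(5)[OF W1(2)], of i1 0] W1(6)[OF W1(2)] by simp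
      also have "\<dots> = cls x (x powi i2 * g2 x) 0" using peq[of x] W1(2) W2(2) False by simp
      also have "\<dots> = \<tau> x"
        using cls_shift[OF False W2(5)[OF W2(2)], of i2 0] W2(6)[OF W2(2)] by simp
      finally show ?thesis .
    next
      case x0: True
      define W where "W = W1 \<inter> W2"
      have oW: "open W" "0 \<in> W" using W1 W2 x0 by (auto simp: W_def)
      have c1: "continuous_on W g1" using W1(4) holomorphic_on_imp_continuous_on
        holomorphic_on_subset[of g1 W1 W] by (auto simp: W_def)
      have c2: "continuous_on W g2" using W2(4) holomorphic_on_imp_continuous_on
        holomorphic_on_subset[of g2 W2 W] by (auto simp: W_def)
      have gen: "a = b \<and> h1 0 = h2 0" if h1: "continuous_on W h1" "\<forall>y\<in>W. h1 y \<noteq> 0"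
        and h2: "continuous_on W h2" "\<forall>y\<in>W. h2 y \<noteq> 0"
        and e: "\<And>y. y \<in> W \<Longrightarrow> y \<noteq> 0 \<Longrightarrow> y powi a * h1 y = y powi b * h2 y"
        and ab: "a \<le> b" for a b h1 h2
      proof -
        define n where "n = nat (b - a)"
        have e2: "h1 y = y ^ n * h2 y" if "y \<in> W" "y \<noteq> 0" for y
        proof -
          have "y powi b = y powi a * y powi (b - a)" using power_int_add[of y a "b-a"] that by simp
          moreover have "y powi (b - a) = y ^ n" using ab by (simp add: n_def power_int_def)
          ultimately show ?thesis using e[OF that] that by (simp add: power_int_0_left_if)
        qed
        have "h1 0 = 0 ^ n * h2 0"
        proof (rule eq_at_point[OF oW h1(1), of "\<lambda>y. y ^ n * h2 y"])
          show "continuous_on W (\<lambda>y. y ^ n * h2 y)" using h2(1) by (intro continuous_intros)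
        qed (use e2 in auto)
        hence "n = 0" using h1(2) oW(2) by (cases n) auto
        hence "a = b" using ab by (simp add: n_def)
        thus ?thesis using \<open>h1 0 = 0 ^ n * h2 0\<close> \<open>n = 0\<close> by simp
      qed
      have ne1: "\<forall>y\<in>W. g1 y \<noteq> 0" "\<forall>y\<in>W. g2 y \<noteq> 0" using W1(5) W2(5) by (auto simp: W_def)
      have "i1 = i2 \<and> g1 0 = g2 0"
      proof (cases "i1 \<le> i2")
        case True thus ?thesis using gen[OF c1 ne1(1) c2 ne1(2)] peq by (auto simp: W_def)
      next
        case False thus ?thesis using gen[OF c2 ne1(2) c1 ne1(1), of i2 i1] peq by (auto simp: W_def)
      qed
      thus ?thesis using W1(6)[OF W1(2)] W2(6)[OF W2(2)] x0 by simp
    qed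
  qed
qed

lemma phi0_surj:
  assumes U: "open U" and h: "h \<in> Ostar_mero U"
  shows "\<exists>\<sigma>\<in>secM U. phi0 U \<sigma> = h"
proof -
  have hh: "h holomorphic_on (U - {0})" "\<forall>x\<in>U - {0}. h x \<noteq> 0" "\<forall>x. x \<notin> U - {0} \<longrightarrow> h x = 0"
    "0 \<in> U \<longrightarrow> (\<exists>W f i. open W \<and> 0 \<in> W \<and> W \<subseteq> U \<and> f holomorphic_on W \<and>
        (\<forall>x\<in>W. f x \<noteq> 0) \<and> (\<forall>x\<in>W - {0}. h x = x powi i * f x))"
    using h unfolding Ostar_mero_def by simp_all
  obtain W0 f i where W0: "0 \<in> U \<Longrightarrow> open W0 \<and> 0 \<in> W0 \<and> W0 \<subseteq> U \<and> f holomorphic_on W0 \<and>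
        (\<forall>x\<in>W0. f x \<noteq> 0) \<and> (\<forall>x\<in>W0 - {0}. h x = x powi i * f x)"
    using hh(4) by blast
  define \<sigma> where "\<sigma> = (\<lambda>x. if x \<in> U then (if x = 0 then cls 0 (f 0) i else cls x (h x) 0) else {})"
  have sM: "\<sigma> \<in> secM U"
    unfolding secM_def mem_Collect_eq
  proof (intro conjI allI impI ballI)
    fix x assume "x \<notin> U" thus "\<sigma> x = {}" by (simp add: \<sigma>_def)
  next
    fix x0 assume x0: "x0 \<in> U"
    show "\<exists>W. open W \<and> x0 \<in> W \<and> W \<subseteq> U \<and>
        (\<exists>g i. g holomorphic_on W \<and> (\<forall>x\<in>W. g x \<noteq> 0) \<and> (\<forall>x\<in>W. \<sigma> x = cls x (g x) i))"
    proof (cases "x0 = 0")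
      case False
      show ?thesis
      proof (intro exI conjI ballI)
        show "open (U - {0})" using U by auto
        show "x0 \<in> U - {0}" using x0 False by auto
        show "U - {0} \<subseteq> U" by auto
        show "h holomorphic_on (U - {0})" by (rule hh(1))
        fix x assume "x \<in> U - {0}"
        thus "h x \<noteq> 0" using hh(2) by auto
        show "\<sigma> x = cls x (h x) 0" using \<open>x \<in> U - {0}\<close> by (simp add: \<sigma>_def)
      qed
    next
      case True
      hence W: "open W0" "0 \<in> W0" "W0 \<subseteq> U" "f holomorphic_on W0"
        "\<forall>x\<in>W0. f x \<noteq> 0" "\<forall>x\<in>W0 - {0}. h x = x powi i * f x"
        using W0 x0 by auto
      show ?thesis
      proof (intro exI conjI ballI)
        show "open W0" "x0 \<in> W0" "W0 \<subseteq> U" "f holomorphic_on W0" using W True by auto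
        fix x assume x: "x \<in> W0"
        thus "f x \<noteq> 0" using W by auto
        show "\<sigma> x = cls x (f x) i"
        proof (cases "x = 0")
          case True
          hence "x \<in> U" using x W(3) by auto
          thus ?thesis using True by (simp add: \<sigma>_def)
        next
          case False
          have "\<sigma> x = cls x (h x) 0" using x W(3) False by (auto simp: \<sigma>_def)
          also have "\<dots> = cls x (x powi (i - 0) * f x) 0" using W(6) x False by simp
          also have "\<dots> = cls x (f x) i" using cls_shift[OF False, of "f x" i 0] W(5) x by simp
          finally show ?thesis .
        qed
      qed
    qed
  qed
  have "phi0 U \<sigma> = h"
  proof
    fix x show "phi0 U \<sigma> x = h x"
    proof (cases "x \<in> U - {0}")
      case True
      hence "phi0 U \<sigma> x = (case rep (cls x (h x) 0) of (x',y',i') \<Rightarrow> x powi i' * y')"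
        by (simp add: phi0_def \<sigma>_def)
      also have "\<dots> = h x" using phi0_cls[of x "h x" 0] True hh(2) by simp
      finally show ?thesis .
    next
      case False thus ?thesis using hh(3) unfolding phi0_def by auto
    qed
  qed
  thus ?thesis using sM by blast
qed

lemma secmult_chart:
  assumes s: "\<sigma> \<in> secM U" and t: "\<tau> \<in> secM U" and x: "x \<in> U"
  obtains W g1 i1 g2 i2 where "open W" "x \<in> W" "W \<subseteq> U"
    "g1 holomorphic_on W" "\<And>y. y \<in> W \<Longrightarrow> g1 y \<noteq> 0" "\<And>y. y \<in> W \<Longrightarrow> \<sigma> y = cls y (g1 y) i1"
    "g2 holomorphic_on W" "\<And>y. y \<in> W \<Longrightarrow> g2 y \<noteq> 0" "\<And>y. y \<in> W \<Longrightarrow> \<tau> y = cls y (g2 y) i2"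
    "\<And>y. y \<in> W \<Longrightarrow> secmult U \<sigma> \<tau> y = cls y (g1 y * g2 y) (i1 + i2)"
proof -
  obtain W1 g1 i1 where W1: "open W1" "x \<in> W1" "W1 \<subseteq> U" "g1 holomorphic_on W1" "\<And>y. y \<in> W1 \<Longrightarrow> g1 y \<noteq> 0"
    "\<And>y. y \<in> W1 \<Longrightarrow> \<sigma> y = cls y (g1 y) i1" using secM_chart[OF s x] by blast
  obtain W2 g2 i2 where W2: "open W2" "x \<in> W2" "W2 \<subseteq> U" "g2 holomorphic_on W2" "\<And>y. y \<in> W2 \<Longrightarrow> g2 y \<noteq> 0"
    "\<And>y. y \<in> W2 \<Longrightarrow> \<tau> y = cls y (g2 y) i2" using secM_chart[OF t x] by blast
  show ?thesis
  proof (rule that[of "W1 \<inter> W2" g1 i1 g2 i2])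
    show "open (W1 \<inter> W2)" using W1(1) W2(1) by auto
    show "x \<in> W1 \<inter> W2" using W1(2) W2(2) by auto
    show "W1 \<inter> W2 \<subseteq> U" using W1(3) by auto
    show "g1 holomorphic_on (W1 \<inter> W2)" using W1(4) holomorphic_on_subset by blast
    show "g2 holomorphic_on (W1 \<inter> W2)" using W2(4) holomorphic_on_subset by blast
    fix y assume y: "y \<in> W1 \<inter> W2"
    show "g1 y \<noteq> 0" "g2 y \<noteq> 0" "\<sigma> y = cls y (g1 y) i1" "\<tau> y = cls y (g2 y) i2"
      using y W1(5,6) W2(5,6) by auto
    have "y \<in> U" using y W1(3) by auto
    thus "secmult U \<sigma> \<tau> y = cls y (g1 y * g2 y) (i1 + i2)"
      using y W1(5,6) W2(5,6) fmult_cls[of "g1 y" "g2 y" y i1 i2] by (simp add: secmult_def)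
  qed
qed

lemma secmult_prop:
  assumes U: "open U" and s: "\<sigma> \<in> secM U" and t: "\<tau> \<in> secM U"
  shows "secmult U \<sigma> \<tau> \<in> secM U \<and> phi0 U (secmult U \<sigma> \<tau>) = (\<lambda>x. phi0 U \<sigma> x * phi0 U \<tau> x)"
proof
  show "secmult U \<sigma> \<tau> \<in> secM U"
    unfolding secM_def mem_Collect_eq
  proof (intro conjI allI impI ballI)
    fix x assume "x \<notin> U" thus "secmult U \<sigma> \<tau> x = {}" by (simp add: secmult_def)
  next
    fix x0 assume x0: "x0 \<in> U"
    obtain W g1 i1 g2 i2 where W: "open W" "x0 \<in> W" "W \<subseteq> U"
      "g1 holomorphic_on W" "\<And>y. y \<in> W \<Longrightarrow> g1 y \<noteq> 0"
      "g2 holomorphic_on W" "\<And>y. y \<in> W \<Longrightarrow> g2 y \<noteq> 0"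
      "\<And>y. y \<in> W \<Longrightarrow> secmult U \<sigma> \<tau> y = cls y (g1 y * g2 y) (i1 + i2)"
      using secmult_chart[OF s t x0] by metis
    show "\<exists>W. open W \<and> x0 \<in> W \<and> W \<subseteq> U \<and>
        (\<exists>g i. g holomorphic_on W \<and> (\<forall>x\<in>W. g x \<noteq> 0) \<and> (\<forall>x\<in>W. secmult U \<sigma> \<tau> x = cls x (g x) i))"
    proof (intro exI conjI ballI)
      show "open W" "x0 \<in> W" "W \<subseteq> U" using W by auto
      show "(\<lambda>y. g1 y * g2 y) holomorphic_on W" using W(4,6) by (intro holomorphic_intros)
      fix x assume x: "x \<in> W"
      show "g1 x * g2 x \<noteq> 0" using W(5,7) x by simp
      show "secmult U \<sigma> \<tau> x = cls x (g1 x * g2 x) (i1 + i2)" using W(8) x by simp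
    qed
  qed
next
  show "phi0 U (secmult U \<sigma> \<tau>) = (\<lambda>x. phi0 U \<sigma> x * phi0 U \<tau> x)"
  proof
    fix x show "phi0 U (secmult U \<sigma> \<tau>) x = phi0 U \<sigma> x * phi0 U \<tau> x"
    proof (cases "x \<in> U - {0}")
      case False thus ?thesis unfolding phi0_def by auto
    next
      case True
      hence xU: "x \<in> U" and x0: "x \<noteq> 0" by auto
      obtain W g1 i1 g2 i2 where W: "open W" "x \<in> W" "W \<subseteq> U"
        "g1 holomorphic_on W" "\<And>y. y \<in> W \<Longrightarrow> g1 y \<noteq> 0" "\<And>y. y \<in> W \<Longrightarrow> \<sigma> y = cls y (g1 y) i1"
        "g2 holomorphic_on W" "\<And>y. y \<in> W \<Longrightarrow> g2 y \<noteq> 0" "\<And>y. y \<in> W \<Longrightarrow> \<tau> y = cls y (g2 y) i2"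
        "\<And>y. y \<in> W \<Longrightarrow> secmult U \<sigma> \<tau> y = cls y (g1 y * g2 y) (i1 + i2)"
        using secmult_chart[OF s t xU] by metis
      have nz: "\<And>y. y \<in> W \<Longrightarrow> g1 y * g2 y \<noteq> 0" using W(5,8) by simp
      have "phi0 U (secmult U \<sigma> \<tau>) x = x powi (i1 + i2) * (g1 x * g2 x)"
        by (rule phi0_chart[OF nz W(10) W(3) W(2) x0])
      also have "\<dots> = (x powi i1 * g1 x) * (x powi i2 * g2 x)"
        using power_int_add[of x i1 i2] x0 by (simp add: algebra_simps)
      also have "\<dots> = phi0 U \<sigma> x * phi0 U \<tau> x"
        using phi0_chart[OF W(5,6,3,2) x0] phi0_chart[OF W(8,9,3,2) x0] by simp
      finally show ?thesis .
    qed
  qed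
qed

lemma phi1_eq: "phi1 U \<alpha> = (\<lambda>x. if x \<in> U - {0} then \<alpha> x / x else 0)"
  by (rule ext) (simp add: phi1_def anchor_def)

lemma phi1_bij:
  assumes U: "open U"
  shows "bij_betw (phi1 U) (secGdual U) (OmegaLog U)"
proof (rule bij_betw_imageI)
  show "inj_on (phi1 U) (secGdual U)"
  proof (rule inj_onI)
    fix \<alpha> \<beta> assume a: "\<alpha> \<in> secGdual U" and b: "\<beta> \<in> secGdual U" and e: "phi1 U \<alpha> = phi1 U \<beta>"
    have ah: "\<alpha> holomorphic_on U" "\<forall>x. x \<notin> U \<longrightarrow> \<alpha> x = 0" using a by (auto simp: secGdual_def)
    have bh: "\<beta> holomorphic_on U" "\<forall>x. x \<notin> U \<longrightarrow> \<beta> x = 0" using b by (auto simp: secGdual_def)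
    have off: "\<alpha> x = \<beta> x" if "x \<in> U" "x \<noteq> 0" for x
    proof -
      have "\<alpha> x / x = \<beta> x / x" using fun_cong[OF e, of x] that by (simp add: phi1_eq)
      thus ?thesis using that by simp
    qed
    show "\<alpha> = \<beta>"
    proof
      fix x show "\<alpha> x = \<beta> x"
      proof (cases "x \<in> U")
        case False thus ?thesis using ah bh by simp
      next
        case True
        show ?thesis
        proof (cases "x = 0")
          case False thus ?thesis using off True by simp
        next
          case x0: True
          show ?thesis unfolding x0
            by (rule eq_at_point[OF U True[unfolded x0]])
               (use ah bh off holomorphic_on_imp_continuous_on in auto)
        qed
      qed
    qed
  qed
next
  show "phi1 U ` secGdual U = OmegaLog U"
  proof (rule set_eqI, rule iffI)
    fix g assume "g \<in> phi1 U ` secGdual U"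
    then obtain \<alpha> where a: "\<alpha> \<in> secGdual U" and g: "g = phi1 U \<alpha>" by blast
    have ah: "\<alpha> holomorphic_on U" "\<forall>x. x \<notin> U \<longrightarrow> \<alpha> x = 0" using a by (auto simp: secGdual_def)
    have "(\<lambda>x. \<alpha> x / x) holomorphic_on (U - {0})"
      using holomorphic_on_subset[OF ah(1), of "U - {0}"] by (auto intro!: holomorphic_intros)
    hence h1: "g holomorphic_on (U - {0})"
      by (rule holomorphic_transform) (simp add: g phi1_eq)
    have h2: "\<forall>x. x \<notin> U - {0} \<longrightarrow> g x = 0" by (simp add: g phi1_eq)
    have h3: "\<forall>x\<in>U - {0}. \<alpha> x = x * g x" by (simp add: g phi1_eq)
    show "g \<in> OmegaLog U" unfolding OmegaLog_def mem_Collect_eq using h1 h2 h3 ah(1) by blast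
  next
    fix g assume "g \<in> OmegaLog U"
    then have gh: "g holomorphic_on (U - {0})" "\<forall>x. x \<notin> U - {0} \<longrightarrow> g x = 0"
      "\<exists>G. G holomorphic_on U \<and> (\<forall>x\<in>U - {0}. G x = x * g x)"
      unfolding OmegaLog_def by simp_all
    then obtain G where G: "G holomorphic_on U" "\<forall>x\<in>U - {0}. G x = x * g x" by blast
    define \<alpha> where "\<alpha> = (\<lambda>x. if x \<in> U then G x else 0)"
    have "\<alpha> holomorphic_on U" by (rule holomorphic_transform[OF G(1)]) (simp add: \<alpha>_def)
    hence a: "\<alpha> \<in> secGdual U" by (simp add: secGdual_def \<alpha>_def)
    have "phi1 U \<alpha> = g"
    proof
      fix x show "phi1 U \<alpha> x = g x"
      proof (cases "x \<in> U - {0}")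
        case True thus ?thesis using G(2) by (simp add: phi1_eq \<alpha>_def)
      next
        case False thus ?thesis using gh(2) by (auto simp: phi1_eq)
      qed
    qed
    thus "g \<in> phi1 U ` secGdual U" using a by blast
  qed
qed

lemma phi1_add: "phi1 U (\<lambda>x. \<alpha> x + \<beta> x) = (\<lambda>x. phi1 U \<alpha> x + phi1 U \<beta> x)"
  by (auto simp: phi1_eq add_divide_distrib)

lemma dCE_chart:
  assumes "open W" "x \<in> W" "W \<subseteq> U" "g holomorphic_on W" "\<And>y. y \<in> W \<Longrightarrow> g y \<noteq> 0"
    "\<And>y. y \<in> W \<Longrightarrow> s y = cls y (g y) i"
  shows "dCE U s x = of_int i + x * deriv g x / g x"
proof -
  have "x \<in> U" using assms by auto
  thus ?thesis using Ltilde_chart[OF assms(1,2,4,5,6)] by (simp add: dCE_def LtildeX_def)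
qed

lemma dCE_prop:
  assumes U: "open U" and s: "s \<in> secM U"
  shows "dCE U s \<in> secGdual U \<and> phi1 U (dCE U s) = dlog U (phi0 U s)"
proof
  have "dCE U s holomorphic_on U"
  proof (rule holo_local)
    fix x assume x: "x \<in> U"
    obtain W g i where W: "open W" "x \<in> W" "W \<subseteq> U" "g holomorphic_on W" "\<And>y. y \<in> W \<Longrightarrow> g y \<noteq> 0"
      "\<And>y. y \<in> W \<Longrightarrow> s y = cls y (g y) i" using secM_chart[OF s x] by blast
    show "\<exists>W h. open W \<and> x \<in> W \<and> h holomorphic_on W \<and> (\<forall>y\<in>W. dCE U s y = h y)"
    proof (intro exI conjI ballI)
      show "open W" "x \<in> W" using W by auto
      show "(\<lambda>y. of_int i + y * deriv g y / g y) holomorphic_on W"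
        using W(1,4,5) by (auto intro!: holomorphic_intros)
      fix y assume "y \<in> W"
      thus "dCE U s y = of_int i + y * deriv g y / g y" using dCE_chart[OF W(1) _ W(3-6)] by blast
    qed
  qed
  thus "dCE U s \<in> secGdual U" by (simp add: secGdual_def dCE_def)
next
  show "phi1 U (dCE U s) = dlog U (phi0 U s)"
  proof
    fix x show "phi1 U (dCE U s) x = dlog U (phi0 U s) x"
    proof (cases "x \<in> U - {0}")
      case False thus ?thesis by (auto simp: phi1_eq dlog_def)
    next
      case True
      hence xU: "x \<in> U" and x0: "x \<noteq> 0" by auto
      obtain W g i where W: "open W" "x \<in> W" "W \<subseteq> U" "g holomorphic_on W" "\<And>y. y \<in> W \<Longrightarrow> g y \<noteq> 0"
        "\<And>y. y \<in> W \<Longrightarrow> s y = cls y (g y) i" using secM_chart[OF s xU] by blast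
      have gx: "g x \<noteq> 0" using W by auto
      have ev: "eventually (\<lambda>y. phi0 U s y = y powi i * g y) (nhds x)"
      proof -
        have "eventually (\<lambda>y. y \<in> W - {0}) (nhds x)"
          by (rule eventually_nhds_in_open) (use W(1,2) x0 in auto)
        thus ?thesis by eventually_elim (use phi0_chart[OF W(5,6,3)] in auto)
      qed
      hence "eventually (\<lambda>y. phi0 U s y = y powi i * g y) (nhds x)" .
      then have "deriv (phi0 U s) x = deriv (\<lambda>y. y powi i * g y) x"
        by (rule deriv_cong_ev) simp
      also have "\<dots> = of_int i * x powi (i - 1) * g x + x powi i * deriv g x"
      proof (rule DERIV_imp_deriv)
        have gd: "(g has_field_derivative deriv g x) (at x)"
          using holomorphic_derivI[OF W(4,1,2)] .
        show "((\<lambda>y. y powi i * g y) has_field_derivative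
                of_int i * x powi (i - 1) * g x + x powi i * deriv g x) (at x)"
          using x0 by (auto intro!: derivative_eq_intros gd)
      qed
      finally have dd: "deriv (phi0 U s) x = of_int i * x powi (i - 1) * g x + x powi i * deriv g x" .
      have pv: "phi0 U s x = x powi i * g x" using phi0_chart[OF W(5,6,3,2) x0] .
      have xi: "x powi (i - 1) = x powi i / x" using power_int_diff[of x i 1] x0 by simp
      have xin: "x powi i \<noteq> 0" using x0 by simp
      have "dlog U (phi0 U s) x = (of_int i * (x powi i / x) * g x + x powi i * deriv g x) / (x powi i * g x)"
        using True dd pv xi by (simp add: dlog_def)
      also have "\<dots> = (of_int i + x * deriv g x / g x) / x"
        using x0 gx xin by (simp add: field_simps)
      also have "\<dots> = phi1 U (dCE U s) x"
        using True dCE_chart[OF W] by (simp add: phi1_eq)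
      finally show ?thesis by simp
    qed
  qed
qed

theorem mainTheorem16:
  fixes U :: "complex set"
  assumes "open U"
  shows "bij_betw (phi0 U) (secM U) (Ostar_mero U)
    \<and> (\<forall>\<sigma>\<in>secM U. \<forall>\<tau>\<in>secM U. secmult U \<sigma> \<tau> \<in> secM U \<and>
          phi0 U (secmult U \<sigma> \<tau>) = (\<lambda>x. phi0 U \<sigma> x * phi0 U \<tau> x))
    \<and> bij_betw (phi1 U) (secGdual U) (OmegaLog U)
    \<and> (\<forall>\<alpha>\<in>secGdual U. \<forall>\<beta>\<in>secGdual U. phi1 U (\<lambda>x. \<alpha> x + \<beta> x) = (\<lambda>x. phi1 U \<alpha> x + phi1 U \<beta> x))
    \<and> (\<forall>s\<in>secM U. dCE U s \<in> secGdual U \<and> phi1 U (dCE U s) = dlog U (phi0 U s))"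
proof (intro conjI ballI)
  show "bij_betw (phi0 U) (secM U) (Ostar_mero U)"
  proof (rule bij_betw_imageI)
    show "inj_on (phi0 U) (secM U)" using phi0_inj[OF assms] by (auto intro: inj_onI)
    show "phi0 U ` secM U = Ostar_mero U"
      using phi0_in[OF assms] phi0_surj[OF assms] by blast
  qed
  show "bij_betw (phi1 U) (secGdual U) (OmegaLog U)" by (rule phi1_bij[OF assms])
  fix \<sigma> \<tau> assume "\<sigma> \<in> secM U" "\<tau> \<in> secM U"
  thus "secmult U \<sigma> \<tau> \<in> secM U" "phi0 U (secmult U \<sigma> \<tau>) = (\<lambda>x. phi0 U \<sigma> x * phi0 U \<tau> x)"
    using secmult_prop[OF assms] by blast+
next
  fix \<alpha> \<beta> show "phi1 U (\<lambda>x. \<alpha> x + \<beta> x) = (\<lambda>x. phi1 U \<alpha> x + phi1 U \<beta> x)" by (rule phi1_add)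
next
  fix s assume "s \<in> secM U"
  thus "dCE U s \<in> secGdual U" "phi1 U (dCE U s) = dlog U (phi0 U s)"
    using dCE_prop[OF assms] by blast+
qed

end
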